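(* Let $(\Omega,\mathcal{F},\mathbb{P})$ be a nonatomic probability space, let $u:\mathbb{R}\to\mathbb{R}$ be a finite-valued utility function bounded from above, and let $\alpha\in\mathbb{R}$ be such that $u(x)>\alpha$ for some $x\in\mathbb{R}$. For $1\le p\le\infty$ set $\mathcal{A}_u^p=\{X\in L^p:\mathbb{E}[u(X)]\ge\alpha\}$. (i) For any $1\le p<\infty$, the closure of $\mathcal{A}_u^\infty$ in $L^p$ equals $\mathcal{A}_u^p$. (ii) Let $S=(S_0,S_T)$ be a traded asset with $S_T\in L^\infty$, assume $\rho_{\mathcal{A}_u^\infty,S}$ is finite-valued (hence continuous) on $L^\infty$, and fix $1\le p<\infty$. Then $\rho_{\mathcal{A}_u^\infty,S}$ can be extended to a finite-valued (hence continuous) risk measure on $L^p$ if and only if $\mathcal{A}_u^p$ has nonempty interior in $L^p$. In this case, the extension is unique and is given by $\rho_{\mathcal{A}_u^p,S}$.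
   Context: A utility function is a nonconstant, increasing, concave function. A traded asset is $S=(S_0,S_T)$ with $S_0>0$, $S_T\ge0$ a.s., $S_T\ne0$. For $\mathcal{B}\subset L^p$, $\rho_{\mathcal{B},S}(X)=\inf\{m\in\mathbb{R}:X+\frac{m}{S_0}S_T\in\mathcal{B}\}$ for $X\in L^p$; a risk measure on $L^p$ is a map of this form. *)

theory Defs
  imports "HOL-Probability.Probability"
begin

definition nonatomic :: "'a measure \<Rightarrow> bool" where
  "nonatomic M \<longleftrightarrow> (\<forall>A\<in>sets M. measure M A > 0 \<longrightarrow>
      (\<exists>B\<in>sets M. B \<subseteq> A \<and> 0 < measure M B \<and> measure M B < measure M A))"

definition utility :: "(real \<Rightarrow> real) \<Rightarrow> bool" where
  "utility u \<longleftrightarrow> mono u \<and> concave_on UNIV u \<and> (\<exists>x y. u x \<noteq> u y)"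

definition Lp :: "'a measure \<Rightarrow> real \<Rightarrow> ('a \<Rightarrow> real) set" where
  "Lp M p = {X. X \<in> borel_measurable M \<and> integrable M (\<lambda>\<omega>. \<bar>X \<omega>\<bar> powr p)}"

definition Linf :: "'a measure \<Rightarrow> ('a \<Rightarrow> real) set" where
  "Linf M = {X. X \<in> borel_measurable M \<and> (\<exists>C. AE \<omega> in M. \<bar>X \<omega>\<bar> \<le> C)}"

definition Lp_norm :: "'a measure \<Rightarrow> real \<Rightarrow> ('a \<Rightarrow> real) \<Rightarrow> real" where
  "Lp_norm M p X = (\<integral>\<omega>. \<bar>X \<omega>\<bar> powr p \<partial>M) powr (1 / p)"

definition Lp_closure :: "'a measure \<Rightarrow> real \<Rightarrow> ('a \<Rightarrow> real) set \<Rightarrow> ('a \<Rightarrow> real) set" where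
  "Lp_closure M p A = {X \<in> Lp M p. \<forall>\<epsilon>>0. \<exists>Y\<in>A. Lp_norm M p (\<lambda>\<omega>. X \<omega> - Y \<omega>) < \<epsilon>}"

definition Lp_interior :: "'a measure \<Rightarrow> real \<Rightarrow> ('a \<Rightarrow> real) set \<Rightarrow> ('a \<Rightarrow> real) set" where
  "Lp_interior M p A = {X \<in> A \<inter> Lp M p. \<exists>\<epsilon>>0. \<forall>Y\<in>Lp M p.
      Lp_norm M p (\<lambda>\<omega>. Y \<omega> - X \<omega>) < \<epsilon> \<longrightarrow> Y \<in> A}"

text \<open>Since u is bounded above, E[u(X)] is well defined in [-\<infinity>,\<infinity>) and
  E[u(X)] \<ge> \<alpha> (\<alpha> real) holds iff u(X) is integrable with integral \<ge> \<alpha>.\<close>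
definition util_accept :: "'a measure \<Rightarrow> (real \<Rightarrow> real) \<Rightarrow> real \<Rightarrow> ('a \<Rightarrow> real) set \<Rightarrow> ('a \<Rightarrow> real) set" where
  "util_accept M u \<alpha> P = {X \<in> P. integrable M (\<lambda>\<omega>. u (X \<omega>)) \<and> \<alpha> \<le> (\<integral>\<omega>. u (X \<omega>) \<partial>M)}"

definition traded_asset :: "'a measure \<Rightarrow> real \<Rightarrow> ('a \<Rightarrow> real) \<Rightarrow> bool" where
  "traded_asset M S0 ST \<longleftrightarrow> S0 > 0 \<and> ST \<in> borel_measurable M \<and>
     (AE \<omega> in M. ST \<omega> \<ge> 0) \<and> \<not> (AE \<omega> in M. ST \<omega> = 0)"

definition rho :: "('a \<Rightarrow> real) set \<Rightarrow> real \<Rightarrow> ('a \<Rightarrow> real) \<Rightarrow> ('a \<Rightarrow> real) \<Rightarrow> ereal" where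
  "rho B S0 ST X = Inf {ereal m | m. (\<lambda>\<omega>. X \<omega> + m / S0 * ST \<omega>) \<in> B}"

definition finite_valued_on :: "('a \<Rightarrow> real) set \<Rightarrow> (('a \<Rightarrow> real) \<Rightarrow> ereal) \<Rightarrow> bool" where
  "finite_valued_on P f \<longleftrightarrow> (\<forall>X\<in>P. \<bar>f X\<bar> \<noteq> \<infinity>)"

definition Lp_continuous :: "'a measure \<Rightarrow> real \<Rightarrow> (('a \<Rightarrow> real) \<Rightarrow> ereal) \<Rightarrow> bool" where
  "Lp_continuous M p f \<longleftrightarrow> (\<forall>X\<in>Lp M p. \<forall>\<epsilon>>0. \<exists>\<delta>>0. \<forall>Y\<in>Lp M p.
      Lp_norm M p (\<lambda>\<omega>. Y \<omega> - X \<omega>) < \<delta> \<longrightarrow>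
      \<bar>real_of_ereal (f Y) - real_of_ereal (f X)\<bar> < \<epsilon>)"

definition is_Lp_extension ::
  "'a measure \<Rightarrow> real \<Rightarrow> real \<Rightarrow> ('a \<Rightarrow> real) \<Rightarrow> ('a \<Rightarrow> real) set \<Rightarrow> (('a \<Rightarrow> real) \<Rightarrow> ereal) \<Rightarrow> bool" where
  "is_Lp_extension M p S0 ST B f \<longleftrightarrow> B \<subseteq> Lp M p \<and>
     finite_valued_on (Lp M p) (rho B S0 ST) \<and> Lp_continuous M p (rho B S0 ST) \<and>
     (\<forall>X\<in>Linf M. rho B S0 ST X = f X)"

end

theory Submission
  imports Defs
begin

lemma powr_cvx0:
  fixes a b t p :: real
  assumes "a \<ge> 0" "b \<ge> 0" "0 \<le> t" "t \<le> 1" "1 \<le> p"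
  shows "((1-t)*a + t*b) powr p \<le> (1-t) * a powr p + t * b powr p"
proof -
  have tp: "s powr p \<le> s" if "0 \<le> s" "s \<le> 1" for s :: real
  proof -
    have "s powr p \<le> s powr 1" using powr_mono'[of 1 p s] that assms by auto
    thus ?thesis using that by simp
  qed
  consider "a = 0" | "b = 0" | "a > 0" "b > 0" using assms by linarith
  thus ?thesis
  proof cases
    case 1
    have "(t*b) powr p = t powr p * b powr p" by (simp add: powr_mult)
    also have "\<dots> \<le> t * b powr p" using tp[of t] assms by (intro mult_right_mono) auto
    finally show ?thesis using 1 by simp
  next
    case 2
    have "((1-t)*a) powr p = (1-t) powr p * a powr p" by (simp add: powr_mult)
    also have "\<dots> \<le> (1-t) * a powr p" using tp[of "1-t"] assms by (intro mult_right_mono) auto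
    finally show ?thesis using 2 by simp
  next
    case 3
    have "(\<lambda>x. x powr p) ((1 - t) *\<^sub>R a + t *\<^sub>R b) \<le> (1 - t) * (\<lambda>x. x powr p) a + t * (\<lambda>x. x powr p) b"
      by (rule convex_onD[OF powr_convex[OF assms(5)]]) (use assms 3 in auto)
    thus ?thesis by simp
  qed
qed

definition clamp :: "real \<Rightarrow> real \<Rightarrow> real" where "clamp k x = max (-k) (min k x)"

lemma clamp_eventually: "\<forall>\<^sub>F n in sequentially. clamp (real n) x = x"
proof -
  have "\<forall>n\<ge>nat \<lceil>\<bar>x\<bar>\<rceil>. clamp (real n) x = x"
  proof (intro allI impI)
    fix n assume "nat \<lceil>\<bar>x\<bar>\<rceil> \<le> n"
    hence "\<bar>x\<bar> \<le> real n" by linarith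
    thus "clamp (real n) x = x" by (auto simp: clamp_def)
  qed
  thus ?thesis unfolding eventually_sequentially by blast
qed

lemma clamp_lim: "(\<lambda>n. g (clamp (real n) x)) \<longlonglongrightarrow> g x"
  by (rule tendsto_eventually) (use clamp_eventually[of x] in \<open>auto elim: eventually_mono\<close>)

lemma clamp_abs: "0 \<le> k \<Longrightarrow> \<bar>clamp k x\<bar> \<le> k" "0 \<le> k \<Longrightarrow> \<bar>x - clamp k x\<bar> \<le> \<bar>x\<bar>" "0 \<le> k \<Longrightarrow> \<bar>clamp k x\<bar> \<le> \<bar>x\<bar>"
  by (auto simp: clamp_def)


lemma utility_meas: "utility u \<Longrightarrow> u \<in> borel_measurable borel"
  by (auto simp: utility_def intro: borel_measurable_mono)

lemma utility_concave: assumes "utility u" "0 \<le> t" "t \<le> 1"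
  shows "u ((1-t)*x + t*y) \<ge> (1-t) * u x + t * u y"
  using concave_onD[of UNIV u t x y] assms by (auto simp: utility_def)

lemma utility_mono: "utility u \<Longrightarrow> x \<le> y \<Longrightarrow> u x \<le> u y"
  by (auto simp: utility_def mono_def)

lemma utility_lip:
  assumes U: "utility u" and xy: "c \<le> x" "x \<le> y"
  shows "u y - u x \<le> (u c - u (c-1)) * (y - x)"
proof -
  define a where "a = c - 1"
  have cc: "concave_on {a..y} u" using U unfolding utility_def concave_on_def
    by (auto intro: convex_on_subset)
  have ay: "a < y" using xy by (simp add: a_def)
  define s where "s = (u y - u a) / (y - a)"
  have 1: "u c \<ge> s * (c - a) + u a" unfolding s_def using concave_onD_Icc'[OF cc, of c] xy by (auto simp: a_def)
  hence sL: "s \<le> u c - u (c-1)" by (simp add: a_def)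
  have 2: "u x \<ge> s * (x - a) + u a" unfolding s_def using concave_onD_Icc'[OF cc, of x] xy by (auto simp: a_def)
  have 3: "u y - u a = s * (y - a)" using ay by (simp add: s_def)
  have "u y - u x \<le> s * (y - x)" using 2 3 by (simp add: algebra_simps)
  also have "\<dots> \<le> (u c - u (c-1)) * (y - x)" using sL xy by (intro mult_right_mono) auto
  finally show ?thesis .
qed

lemma utility_lip_max:
  assumes U: "utility u"
  shows "\<bar>u (max x c) - u (max y c)\<bar> \<le> (u c - u (c-1)) * \<bar>x - y\<bar>"
proof -
  have L: "u c - u (c-1) \<ge> 0" using utility_mono[OF U, of "c-1" c] by simp
  have m: "\<bar>max x c - max y c\<bar> \<le> \<bar>x - y\<bar>" by (auto simp: max_def)
  { fix a b assume "c \<le> a" "a \<le> b"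
    hence "\<bar>u b - u a\<bar> \<le> (u c - u (c-1)) * \<bar>b - a\<bar>"
      using utility_lip[OF U, of c a b] utility_mono[OF U, of a b] by auto }
  note * = this
  have "\<bar>u (max x c) - u (max y c)\<bar> \<le> (u c - u (c-1)) * \<bar>max x c - max y c\<bar>"
  proof (cases "max x c \<le> max y c")
    case True thus ?thesis using *[of "max x c" "max y c"] by (simp add: abs_minus_commute)
  next
    case False
    hence "c \<le> max y c" "max y c \<le> max x c" by auto
    from *[OF this] show ?thesis by (simp add: abs_minus_commute)
  qed
  also have "\<dots> \<le> (u c - u (c-1)) * \<bar>x - y\<bar>" using L m by (intro mult_left_mono) auto
  finally show ?thesis .
qed


lemma rho_le: "(\<lambda>\<omega>. X \<omega> + m / S0 * ST \<omega>) \<in> B \<Longrightarrow> rho B S0 ST X \<le> ereal m"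
  unfolding rho_def by (rule Inf_lower) blast

lemma rho_lt: "rho B S0 ST X < ereal m \<Longrightarrow> \<exists>m'<m. (\<lambda>\<omega>. X \<omega> + m' / S0 * ST \<omega>) \<in> B"
  unfolding rho_def by (auto simp: Inf_less_iff)

lemma rho_ge: "(\<And>m. (\<lambda>\<omega>. X \<omega> + m / S0 * ST \<omega>) \<in> B \<Longrightarrow> c \<le> m) \<Longrightarrow> ereal c \<le> rho B S0 ST X"
  unfolding rho_def by (rule Inf_greatest) auto

context prob_space begin

lemma Linf_Lp: assumes "1 \<le> p" "X \<in> Linf M" shows "X \<in> Lp M p"
proof -
  from assms obtain C where X: "X \<in> borel_measurable M" and C: "AE \<omega> in M. \<bar>X \<omega>\<bar> \<le> C"
    by (auto simp: Linf_def)
  have "integrable M (\<lambda>\<omega>. \<bar>X \<omega>\<bar> powr p)"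
  proof (rule Bochner_Integration.integrable_bound)
    show "integrable M (\<lambda>_. \<bar>C\<bar> powr p)" by simp
    show "(\<lambda>\<omega>. \<bar>X \<omega>\<bar> powr p) \<in> borel_measurable M" using X by measurable
    show "AE x in M. norm (\<bar>X x\<bar> powr p) \<le> norm (\<bar>C\<bar> powr p)"
      using C by eventually_elim (use assms in \<open>auto intro!: powr_mono2\<close>)
  qed
  thus ?thesis using X by (simp add: Lp_def)
qed

lemma Lp_norm_nonneg: "Lp_norm M p X \<ge> 0" by (simp add: Lp_norm_def)

lemma Lp_int_nonneg: "(\<integral>\<omega>. \<bar>X \<omega>\<bar> powr (p::real) \<partial>M) \<ge> (0::real)" by simp

lemma Lp_norm_pow: assumes "1 \<le> p" shows "Lp_norm M p X powr p = (\<integral>\<omega>. \<bar>X \<omega>\<bar> powr p \<partial>M)"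
  using assms Lp_int_nonneg[of X] by (simp add: Lp_norm_def powr_powr)

lemma Lp_memD: "X \<in> Lp M p \<Longrightarrow> X \<in> borel_measurable M" "X \<in> Lp M p \<Longrightarrow> integrable M (\<lambda>\<omega>. \<bar>X \<omega>\<bar> powr p)"
  by (auto simp: Lp_def)

lemma Lp_add_aux:
  assumes p: "1 \<le> p" and XL: "X \<in> Lp M p" and YL: "Y \<in> Lp M p" and eta: "\<eta> > 0"
  shows "(\<lambda>\<omega>. X \<omega> + Y \<omega>) \<in> Lp M p \<and> Lp_norm M p (\<lambda>\<omega>. X \<omega> + Y \<omega>) \<le> Lp_norm M p X + Lp_norm M p Y + 2*\<eta>"
proof -
  define A where "A = Lp_norm M p X + \<eta>"
  define B where "B = Lp_norm M p Y + \<eta>"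
  define S where "S = A + B"
  define t where "t = B / S"
  have A0: "A > 0" and B0: "B > 0" using eta Lp_norm_nonneg[of p X] Lp_norm_nonneg[of p Y] by (auto simp: A_def B_def)
  hence S0: "S > 0" by (simp add: S_def)
  have t01: "0 \<le> t" "t \<le> 1" using A0 B0 by (auto simp: t_def S_def)
  have t1: "1 - t = A / S" using A0 B0 by (simp add: t_def S_def field_simps)
  have [measurable]: "X \<in> borel_measurable M" "Y \<in> borel_measurable M" using XL YL by (auto simp: Lp_def)
  have iX: "integrable M (\<lambda>\<omega>. \<bar>X \<omega>\<bar> powr p)" and iY: "integrable M (\<lambda>\<omega>. \<bar>Y \<omega>\<bar> powr p)"
    using XL YL by (auto simp: Lp_def)
  define g where "g \<omega> = S powr p * ((1-t) * (\<bar>X \<omega>\<bar> powr p / A powr p) + t * (\<bar>Y \<omega>\<bar> powr p / B powr p))" for \<omega>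
  have gi: "integrable M g" unfolding g_def using iX iY by (intro integrable_mult_right integrable_add integrable_divide) auto
  have pt: "\<bar>X \<omega> + Y \<omega>\<bar> powr p \<le> g \<omega>" for \<omega>
  proof -
    have "S * ((1-t) * (\<bar>X \<omega>\<bar>/A) + t * (\<bar>Y \<omega>\<bar>/B)) = \<bar>X \<omega>\<bar> + \<bar>Y \<omega>\<bar>"
      using A0 B0 S0 unfolding t1 unfolding t_def by (simp add: field_simps)
    hence "\<bar>X \<omega> + Y \<omega>\<bar> \<le> S * ((1-t) * (\<bar>X \<omega>\<bar>/A) + t * (\<bar>Y \<omega>\<bar>/B))"
      using abs_triangle_ineq by simp
    hence "\<bar>X \<omega> + Y \<omega>\<bar> powr p \<le> (S * ((1-t) * (\<bar>X \<omega>\<bar>/A) + t * (\<bar>Y \<omega>\<bar>/B))) powr p"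
      using p by (intro powr_mono2) auto
    also have "\<dots> = S powr p * ((1-t) * (\<bar>X \<omega>\<bar>/A) + t * (\<bar>Y \<omega>\<bar>/B)) powr p"
      by (simp add: powr_mult)
    also have "\<dots> \<le> S powr p * ((1-t) * (\<bar>X \<omega>\<bar>/A) powr p + t * (\<bar>Y \<omega>\<bar>/B) powr p)"
      using powr_cvx0[of "\<bar>X \<omega>\<bar>/A" "\<bar>Y \<omega>\<bar>/B" t p] A0 B0 t01 p
      by (intro mult_left_mono) auto
    also have "\<dots> = g \<omega>" using A0 B0 by (simp add: g_def powr_divide)
    finally show ?thesis .
  qed
  have iZ: "integrable M (\<lambda>\<omega>. \<bar>X \<omega> + Y \<omega>\<bar> powr p)"
    by (rule Bochner_Integration.integrable_bound[OF gi]) (use pt in \<open>auto intro!: AE_I2 order_trans[OF _ abs_ge_self]\<close>)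
  have "(\<integral>\<omega>. \<bar>X \<omega> + Y \<omega>\<bar> powr p \<partial>M) \<le> integral\<^sup>L M g"
    by (rule integral_mono[OF iZ gi pt])
  also have "integral\<^sup>L M g = S powr p * ((1-t) * ((\<integral>\<omega>. \<bar>X \<omega>\<bar> powr p \<partial>M) / A powr p) + t * ((\<integral>\<omega>. \<bar>Y \<omega>\<bar> powr p \<partial>M) / B powr p))"
    unfolding g_def using iX iY by simp
  also have "\<dots> \<le> S powr p * ((1-t) * 1 + t * 1)"
  proof -
    have a: "(\<integral>\<omega>. \<bar>X \<omega>\<bar> powr p \<partial>M) \<le> A powr p"
      unfolding Lp_norm_pow[OF p, symmetric] using p A0 eta Lp_norm_nonneg[of p X] by (intro powr_mono2) (auto simp: A_def)
    have b: "(\<integral>\<omega>. \<bar>Y \<omega>\<bar> powr p \<partial>M) \<le> B powr p"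
      unfolding Lp_norm_pow[OF p, symmetric] using p B0 eta Lp_norm_nonneg[of p Y] by (intro powr_mono2) (auto simp: B_def)
    have "(\<integral>\<omega>. \<bar>X \<omega>\<bar> powr p \<partial>M) / A powr p \<le> 1" using a A0 by simp
    moreover have "(\<integral>\<omega>. \<bar>Y \<omega>\<bar> powr p \<partial>M) / B powr p \<le> 1" using b B0 by simp
    ultimately show ?thesis using t01 by (intro mult_left_mono add_mono mult_left_mono) auto
  qed
  also have "\<dots> = S powr p" by simp
  finally have I: "(\<integral>\<omega>. \<bar>X \<omega> + Y \<omega>\<bar> powr p \<partial>M) \<le> S powr p" .
  have "Lp_norm M p (\<lambda>\<omega>. X \<omega> + Y \<omega>) \<le> (S powr p) powr (1/p)"
    unfolding Lp_norm_def using p I by (intro powr_mono2) (auto intro: Lp_int_nonneg)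
  also have "\<dots> = S" using p S0 by (simp add: powr_powr)
  finally show ?thesis using iZ by (auto simp: Lp_def S_def A_def B_def)
qed

lemma Lp_add:
  assumes p: "1 \<le> p" and XL: "X \<in> Lp M p" and YL: "Y \<in> Lp M p"
  shows "(\<lambda>\<omega>. X \<omega> + Y \<omega>) \<in> Lp M p" "Lp_norm M p (\<lambda>\<omega>. X \<omega> + Y \<omega>) \<le> Lp_norm M p X + Lp_norm M p Y"
proof -
  show "(\<lambda>\<omega>. X \<omega> + Y \<omega>) \<in> Lp M p" using Lp_add_aux[OF assms, of 1] by simp
  show "Lp_norm M p (\<lambda>\<omega>. X \<omega> + Y \<omega>) \<le> Lp_norm M p X + Lp_norm M p Y"
  proof (rule field_le_epsilon)
    fix e :: real assume "0 < e"
    thus "Lp_norm M p (\<lambda>\<omega>. X \<omega> + Y \<omega>) \<le> Lp_norm M p X + Lp_norm M p Y + e"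
      using Lp_add_aux[OF assms, of "e/2"] by simp
  qed
qed

lemma Lp_scale:
  assumes p: "1 \<le> p" and XL: "X \<in> Lp M p"
  shows "(\<lambda>\<omega>. c * X \<omega>) \<in> Lp M p" "Lp_norm M p (\<lambda>\<omega>. c * X \<omega>) = \<bar>c\<bar> * Lp_norm M p X"
proof -
  have e: "\<bar>c * X \<omega>\<bar> powr p = \<bar>c\<bar> powr p * \<bar>X \<omega>\<bar> powr p" for \<omega>
    by (simp add: abs_mult powr_mult)
  show "(\<lambda>\<omega>. c * X \<omega>) \<in> Lp M p" using XL by (auto simp: Lp_def e)
  have "Lp_norm M p (\<lambda>\<omega>. c * X \<omega>) = (\<bar>c\<bar> powr p * (\<integral>\<omega>. \<bar>X \<omega>\<bar> powr p \<partial>M)) powr (1/p)"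
    unfolding Lp_norm_def e by simp
  also have "\<dots> = (\<bar>c\<bar> powr p) powr (1/p) * (\<integral>\<omega>. \<bar>X \<omega>\<bar> powr p \<partial>M) powr (1/p)"
    by (simp add: powr_mult)
  also have "\<dots> = \<bar>c\<bar> * Lp_norm M p X" using p by (simp add: powr_powr Lp_norm_def)
  finally show "Lp_norm M p (\<lambda>\<omega>. c * X \<omega>) = \<bar>c\<bar> * Lp_norm M p X" .
qed

lemma Lp_norm_commute: "Lp_norm M p (\<lambda>\<omega>. X \<omega> - Y \<omega>) = Lp_norm M p (\<lambda>\<omega>. Y \<omega> - X \<omega>)"
  by (simp add: Lp_norm_def abs_minus_commute)

lemma Lp_lin:
  assumes p: "1 \<le> p" and XL: "X \<in> Lp M p" and YL: "Y \<in> Lp M p"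
  shows "(\<lambda>\<omega>. a * X \<omega> + b * Y \<omega>) \<in> Lp M p"
  using Lp_add(1)[OF p Lp_scale(1)[OF p XL] Lp_scale(1)[OF p YL]] .

lemma Lp_diff:
  assumes p: "1 \<le> p" and XL: "X \<in> Lp M p" and YL: "Y \<in> Lp M p"
  shows "(\<lambda>\<omega>. X \<omega> - Y \<omega>) \<in> Lp M p"
  using Lp_lin[OF p XL YL, of 1 "-1"] by simp

lemma Lp_tri:
  assumes p: "1 \<le> p" and XL: "X \<in> Lp M p" and YL: "Y \<in> Lp M p" and ZL: "Z \<in> Lp M p"
  shows "Lp_norm M p (\<lambda>\<omega>. X \<omega> - Z \<omega>) \<le> Lp_norm M p (\<lambda>\<omega>. X \<omega> - Y \<omega>) + Lp_norm M p (\<lambda>\<omega>. Y \<omega> - Z \<omega>)"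
  using Lp_add(2)[OF p Lp_diff[OF p XL YL] Lp_diff[OF p YL ZL]] by simp

lemma const_Lp: "1 \<le> p \<Longrightarrow> (\<lambda>_. c) \<in> Lp M p"
  by (rule Linf_Lp) (auto simp: Linf_def intro!: exI[of _ "\<bar>c\<bar>"])


lemma clamp_measurable[measurable]: "X \<in> borel_measurable M \<Longrightarrow> (\<lambda>\<omega>. clamp k (X \<omega>)) \<in> borel_measurable M"
  unfolding clamp_def by (intro borel_measurable_max borel_measurable_min) auto

lemma clamp_Linf: "X \<in> borel_measurable M \<Longrightarrow> 0 \<le> k \<Longrightarrow> (\<lambda>\<omega>. clamp k (X \<omega>)) \<in> Linf M"
  unfolding Linf_def using clamp_abs(1) by (auto intro!: exI[of _ k])

lemma clamp_between: "0 \<le> k \<Longrightarrow> min x 0 \<le> clamp k x \<and> clamp k x \<le> max x 0"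
  by (auto simp: clamp_def)

lemma Lp_density:
  assumes p: "1 \<le> p" and XL: "X \<in> Lp M p" and e: "\<epsilon> > 0"
  shows "\<exists>N. \<forall>n\<ge>N. Lp_norm M p (\<lambda>\<omega>. X \<omega> - clamp (real n) (X \<omega>)) < \<epsilon>"
proof -
  have [measurable]: "X \<in> borel_measurable M" using XL by (simp add: Lp_def)
  have "(\<lambda>n. \<integral>\<omega>. \<bar>X \<omega> - clamp (real n) (X \<omega>)\<bar> powr p \<partial>M) \<longlonglongrightarrow> (\<integral>\<omega>. 0 \<partial>M)"
  proof (rule integral_dominated_convergence[where w="\<lambda>\<omega>. \<bar>X \<omega>\<bar> powr p"])
    show "integrable M (\<lambda>\<omega>. \<bar>X \<omega>\<bar> powr p)" using XL by (simp add: Lp_def)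
    show "AE x in M. (\<lambda>i. \<bar>X x - clamp (real i) (X x)\<bar> powr p) \<longlonglongrightarrow> 0"
      using clamp_lim[of "\<lambda>y. \<bar>X x - y\<bar> powr p" "X x" for x] p by auto
    show "AE x in M. norm (\<bar>X x - clamp (real i) (X x)\<bar> powr p) \<le> \<bar>X x\<bar> powr p" for i
      using p clamp_abs(2)[of "real i"] by (auto intro!: powr_mono2)
  qed auto
  hence "\<forall>\<^sub>F n in sequentially. (\<integral>\<omega>. \<bar>X \<omega> - clamp (real n) (X \<omega>)\<bar> powr p \<partial>M) < \<epsilon> powr p"
    using e by (auto intro: order_tendstoD)
  then obtain N where N: "\<And>n. n \<ge> N \<Longrightarrow> (\<integral>\<omega>. \<bar>X \<omega> - clamp (real n) (X \<omega>)\<bar> powr p \<partial>M) < \<epsilon> powr p"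
    by (auto simp: eventually_sequentially)
  have "Lp_norm M p (\<lambda>\<omega>. X \<omega> - clamp (real n) (X \<omega>)) < \<epsilon>" if "n \<ge> N" for n
  proof -
    have "Lp_norm M p (\<lambda>\<omega>. X \<omega> - clamp (real n) (X \<omega>)) < (\<epsilon> powr p) powr (1/p)"
      unfolding Lp_norm_def using p N[OF that] by (intro powr_less_mono2) (auto intro: Lp_int_nonneg)
    thus ?thesis using p e by (simp add: powr_powr)
  qed
  thus ?thesis by auto
qed

lemma Lp_dense:
  assumes p: "1 \<le> p" and XL: "X \<in> Lp M p" and e: "\<epsilon> > 0"
  shows "\<exists>Y\<in>Linf M. Lp_norm M p (\<lambda>\<omega>. X \<omega> - Y \<omega>) < \<epsilon>"
proof -
  obtain N where "Lp_norm M p (\<lambda>\<omega>. X \<omega> - clamp (real N) (X \<omega>)) < \<epsilon>"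
    using Lp_density[OF assms] by auto
  moreover have "(\<lambda>\<omega>. clamp (real N) (X \<omega>)) \<in> Linf M" using XL by (intro clamp_Linf) (auto simp: Lp_def)
  ultimately show ?thesis by (intro bexI[of _ "\<lambda>\<omega>. clamp (real N) (X \<omega>)"]) auto
qed

lemma abs_powr_convex: assumes "1 \<le> p" shows "convex_on UNIV (\<lambda>x::real. \<bar>x\<bar> powr p)"
proof (rule convex_onI)
  fix t x y :: real assume t: "0 < t" "t < 1"
  have "\<bar>(1 - t) *\<^sub>R x + t *\<^sub>R y\<bar> powr p \<le> ((1-t)*\<bar>x\<bar> + t*\<bar>y\<bar>) powr p"
    using t assms by (intro powr_mono2) (auto simp: abs_mult intro!: order_trans[OF abs_triangle_ineq])
  also have "\<dots> \<le> (1-t) * \<bar>x\<bar> powr p + t * \<bar>y\<bar> powr p" using powr_cvx0[of "\<bar>x\<bar>" "\<bar>y\<bar>" t p] t assms by auto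
  finally show "\<bar>(1 - t) *\<^sub>R x + t *\<^sub>R y\<bar> powr p \<le> (1-t) * \<bar>x\<bar> powr p + t * \<bar>y\<bar> powr p" .
qed auto

lemma Lp_L1:
  assumes p: "1 \<le> p" and XL: "X \<in> Lp M p"
  shows "integrable M (\<lambda>\<omega>. \<bar>X \<omega>\<bar>)" "(\<integral>\<omega>. \<bar>X \<omega>\<bar> \<partial>M) \<le> Lp_norm M p X"
proof -
  have [measurable]: "X \<in> borel_measurable M" using XL by (simp add: Lp_def)
  have iX: "integrable M (\<lambda>\<omega>. \<bar>X \<omega>\<bar> powr p)" using XL by (simp add: Lp_def)
  have pt: "\<bar>X \<omega>\<bar> \<le> 1 + \<bar>X \<omega>\<bar> powr p" for \<omega>
  proof (cases "\<bar>X \<omega>\<bar> \<le> 1")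
    case False
    hence "\<bar>X \<omega>\<bar> powr 1 \<le> \<bar>X \<omega>\<bar> powr p" using p by (intro powr_mono) auto
    thus ?thesis by simp
  next
    case True
    have "0 \<le> \<bar>X \<omega>\<bar> powr p" by simp
    with True show ?thesis by linarith
  qed
  show i1: "integrable M (\<lambda>\<omega>. \<bar>X \<omega>\<bar>)"
    by (rule Bochner_Integration.integrable_bound[where f="\<lambda>\<omega>. 1 + \<bar>X \<omega>\<bar> powr p"])
       (use iX pt in \<open>auto intro!: AE_I2 order_trans[OF _ abs_ge_self]\<close>)
  have "(\<lambda>x. \<bar>x\<bar> powr p) (expectation (\<lambda>\<omega>. \<bar>X \<omega>\<bar>)) \<le> expectation (\<lambda>\<omega>. (\<lambda>x. \<bar>x\<bar> powr p) (\<bar>X \<omega>\<bar>))"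
    by (rule jensens_inequality[where I=UNIV]) (use i1 iX abs_powr_convex[OF p] in auto)
  hence J: "(\<integral>\<omega>. \<bar>X \<omega>\<bar> \<partial>M) powr p \<le> (\<integral>\<omega>. \<bar>X \<omega>\<bar> powr p \<partial>M)" by simp
  have "(\<integral>\<omega>. \<bar>X \<omega>\<bar> \<partial>M) = ((\<integral>\<omega>. \<bar>X \<omega>\<bar> \<partial>M) powr p) powr (1/p)" using p by (simp add: powr_powr)
  also have "\<dots> \<le> Lp_norm M p X" unfolding Lp_norm_def using J p by (intro powr_mono2) auto
  finally show "(\<integral>\<omega>. \<bar>X \<omega>\<bar> \<partial>M) \<le> Lp_norm M p X" .
qed


lemma ua_mono:
  assumes U: "utility u" and K: "\<And>x. u x \<le> K"
    and XA: "X \<in> util_accept M u \<alpha> P" and YP: "Y \<in> P" and Ym: "Y \<in> borel_measurable M"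
    and le: "AE \<omega> in M. X \<omega> \<le> Y \<omega>"
  shows "Y \<in> util_accept M u \<alpha> P"
proof -
  have uM: "u \<in> borel_measurable borel" using U by (rule utility_meas)
  have iX: "integrable M (\<lambda>\<omega>. u (X \<omega>))" and aX: "\<alpha> \<le> (\<integral>\<omega>. u (X \<omega>) \<partial>M)" using XA by (auto simp: util_accept_def)
  have mY: "(\<lambda>\<omega>. u (Y \<omega>)) \<in> borel_measurable M" using uM Ym by measurable
  have iY: "integrable M (\<lambda>\<omega>. u (Y \<omega>))"
  proof (rule Bochner_Integration.integrable_bound[where f="\<lambda>\<omega>. \<bar>u (X \<omega>)\<bar> + \<bar>K\<bar>"])
    show "integrable M (\<lambda>\<omega>. \<bar>u (X \<omega>)\<bar> + \<bar>K\<bar>)" using iX by auto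
    show "AE x in M. norm (u (Y x)) \<le> norm (\<bar>u (X x)\<bar> + \<bar>K\<bar>)"
      using le by eventually_elim (use utility_mono[OF U] K in \<open>smt (verit) real_norm_def\<close>)
  qed (rule mY)
  have "(\<integral>\<omega>. u (X \<omega>) \<partial>M) \<le> (\<integral>\<omega>. u (Y \<omega>) \<partial>M)"
    by (rule integral_mono_AE[OF iX iY]) (use le utility_mono[OF U] in \<open>auto elim: eventually_mono\<close>)
  thus ?thesis using aX iY YP by (auto simp: util_accept_def)
qed

lemma ua_convex:
  assumes U: "utility u" and K: "\<And>x. u x \<le> K"
    and XA: "X \<in> util_accept M u \<alpha> P" and YA: "Y \<in> util_accept M u \<alpha> P"
    and t: "0 \<le> t" "t \<le> 1"
    and ZP: "(\<lambda>\<omega>. (1-t) * X \<omega> + t * Y \<omega>) \<in> P" and Xm: "X \<in> borel_measurable M" and Ym: "Y \<in> borel_measurable M"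
  shows "(\<lambda>\<omega>. (1-t) * X \<omega> + t * Y \<omega>) \<in> util_accept M u \<alpha> P"
proof -
  have uM: "u \<in> borel_measurable borel" using U by (rule utility_meas)
  have iX: "integrable M (\<lambda>\<omega>. u (X \<omega>))" and aX: "\<alpha> \<le> (\<integral>\<omega>. u (X \<omega>) \<partial>M)" using XA by (auto simp: util_accept_def)
  have iY: "integrable M (\<lambda>\<omega>. u (Y \<omega>))" and aY: "\<alpha> \<le> (\<integral>\<omega>. u (Y \<omega>) \<partial>M)" using YA by (auto simp: util_accept_def)
  have mZ: "(\<lambda>\<omega>. u ((1-t) * X \<omega> + t * Y \<omega>)) \<in> borel_measurable M" using uM Xm Ym by measurable
  have iC: "integrable M (\<lambda>\<omega>. (1-t) * u (X \<omega>) + t * u (Y \<omega>))" using iX iY by auto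
  have pt: "(1-t) * u (X \<omega>) + t * u (Y \<omega>) \<le> u ((1-t) * X \<omega> + t * Y \<omega>)" for \<omega>
    using utility_concave[OF U t] .
  have iZ: "integrable M (\<lambda>\<omega>. u ((1-t) * X \<omega> + t * Y \<omega>))"
  proof (rule Bochner_Integration.integrable_bound[where f="\<lambda>\<omega>. \<bar>(1-t) * u (X \<omega>) + t * u (Y \<omega>)\<bar> + \<bar>K\<bar>"])
    show "integrable M (\<lambda>\<omega>. \<bar>(1-t) * u (X \<omega>) + t * u (Y \<omega>)\<bar> + \<bar>K\<bar>)" using iC by auto
    show "AE x in M. norm (u ((1-t) * X x + t * Y x)) \<le> norm (\<bar>(1-t) * u (X x) + t * u (Y x)\<bar> + \<bar>K\<bar>)"
      using pt K by (intro AE_I2) (smt (verit) real_norm_def)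
  qed (rule mZ)
  have "\<alpha> \<le> (1-t) * (\<integral>\<omega>. u (X \<omega>) \<partial>M) + t * (\<integral>\<omega>. u (Y \<omega>) \<partial>M)"
  proof -
    have "(1-t) * \<alpha> \<le> (1-t) * (\<integral>\<omega>. u (X \<omega>) \<partial>M)" using aX t by (intro mult_left_mono) auto
    moreover have "t * \<alpha> \<le> t * (\<integral>\<omega>. u (Y \<omega>) \<partial>M)" using aY t by (intro mult_left_mono) auto
    ultimately show ?thesis by (simp add: algebra_simps)
  qed
  also have "\<dots> = (\<integral>\<omega>. (1-t) * u (X \<omega>) + t * u (Y \<omega>) \<partial>M)" using iX iY by simp
  also have "\<dots> \<le> (\<integral>\<omega>. u ((1-t) * X \<omega> + t * Y \<omega>) \<partial>M)" by (rule integral_mono[OF iC iZ pt])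
  finally show ?thesis using iZ ZP by (auto simp: util_accept_def)
qed


lemma max_eventually: "\<forall>\<^sub>F n in sequentially. max x (- real n) = x"
proof -
  have "\<forall>n\<ge>nat \<lceil>\<bar>x\<bar>\<rceil>. max x (- real n) = x"
  proof (intro allI impI)
    fix n assume "nat \<lceil>\<bar>x\<bar>\<rceil> \<le> n"
    hence "\<bar>x\<bar> \<le> real n" by linarith
    thus "max x (- real n) = x" by auto
  qed
  thus ?thesis unfolding eventually_sequentially by blast
qed

lemma max_eventually_g: "\<forall>\<^sub>F n in sequentially. g (max x (- real n)) = g x"
  using max_eventually[of x] by (rule eventually_mono) simp

lemma ua_closed:
  assumes p: "1 \<le> p" and U: "utility u" and K: "\<And>x. u x \<le> K" and XL: "X \<in> Lp M p"
    and approx: "\<And>\<epsilon>. \<epsilon> > 0 \<Longrightarrow> \<exists>Y\<in>Lp M p. integrable M (\<lambda>\<omega>. u (Y \<omega>)) \<and> \<alpha> \<le> (\<integral>\<omega>. u (Y \<omega>) \<partial>M)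
        \<and> Lp_norm M p (\<lambda>\<omega>. X \<omega> - Y \<omega>) < \<epsilon>"
  shows "integrable M (\<lambda>\<omega>. u (X \<omega>)) \<and> \<alpha> \<le> (\<integral>\<omega>. u (X \<omega>) \<partial>M)"
proof -
  have uM[measurable]: "u \<in> borel_measurable borel" using U by (rule utility_meas)
  have Xm[measurable]: "X \<in> borel_measurable M" using XL by (simp add: Lp_def)
  have ib: "integrable M (\<lambda>\<omega>. u (max (Z \<omega>) c))" if [measurable]: "Z \<in> borel_measurable M" for Z c
  proof (rule Bochner_Integration.integrable_bound[where f="\<lambda>_. \<bar>u c\<bar> + \<bar>K\<bar>"])
    show "AE x in M. norm (u (max (Z x) c)) \<le> norm (\<bar>u c\<bar> + \<bar>K\<bar>)"
    proof (intro AE_I2)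
      fix x have "u c \<le> u (max (Z x) c)" "u (max (Z x) c) \<le> K" using utility_mono[OF U, of c "max (Z x) c"] K by auto
      thus "norm (u (max (Z x) c)) \<le> norm (\<bar>u c\<bar> + \<bar>K\<bar>)" by auto
    qed
  qed auto
  have step1: "\<alpha> \<le> (\<integral>\<omega>. u (max (X \<omega>) c) \<partial>M)" for c
  proof (rule field_le_epsilon)
    fix \<eta> :: real assume eta: "0 < \<eta>"
    define L where "L = u c - u (c-1)"
    have L0: "L \<ge> 0" using utility_mono[OF U, of "c-1" c] by (simp add: L_def)
    obtain Y where YL: "Y \<in> Lp M p" and iY: "integrable M (\<lambda>\<omega>. u (Y \<omega>))" and aY: "\<alpha> \<le> (\<integral>\<omega>. u (Y \<omega>) \<partial>M)"
      and nY: "Lp_norm M p (\<lambda>\<omega>. X \<omega> - Y \<omega>) < \<eta> / (L+1)"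
      using approx[of "\<eta>/(L+1)"] eta L0 by auto
    have Ym[measurable]: "Y \<in> borel_measurable M" using YL by (simp add: Lp_def)
    have DL: "(\<lambda>\<omega>. X \<omega> - Y \<omega>) \<in> Lp M p" by (rule Lp_diff[OF p XL YL])
    have iD: "integrable M (\<lambda>\<omega>. \<bar>X \<omega> - Y \<omega>\<bar>)" and nD: "(\<integral>\<omega>. \<bar>X \<omega> - Y \<omega>\<bar> \<partial>M) \<le> Lp_norm M p (\<lambda>\<omega>. X \<omega> - Y \<omega>)"
      using Lp_L1[OF p DL] by auto
    have "\<alpha> \<le> (\<integral>\<omega>. u (Y \<omega>) \<partial>M)" by (rule aY)
    also have "\<dots> \<le> (\<integral>\<omega>. u (max (Y \<omega>) c) \<partial>M)"
      by (rule integral_mono[OF iY ib]) (auto intro: utility_mono[OF U])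
    also have "\<dots> = (\<integral>\<omega>. u (max (X \<omega>) c) \<partial>M) + (\<integral>\<omega>. u (max (Y \<omega>) c) - u (max (X \<omega>) c) \<partial>M)"
      using ib[OF Xm, of c] ib[OF Ym, of c] by simp
    also have "(\<integral>\<omega>. u (max (Y \<omega>) c) - u (max (X \<omega>) c) \<partial>M) \<le> (\<integral>\<omega>. L * \<bar>X \<omega> - Y \<omega>\<bar> \<partial>M)"
    proof (rule integral_mono)
      show "integrable M (\<lambda>\<omega>. u (max (Y \<omega>) c) - u (max (X \<omega>) c))" using ib[OF Xm, of c] ib[OF Ym, of c] by simp
      show "integrable M (\<lambda>\<omega>. L * \<bar>X \<omega> - Y \<omega>\<bar>)" using iD by simp
      fix \<omega> show "u (max (Y \<omega>) c) - u (max (X \<omega>) c) \<le> L * \<bar>X \<omega> - Y \<omega>\<bar>"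
        using utility_lip_max[OF U, of "Y \<omega>" c "X \<omega>"] by (simp add: L_def abs_minus_commute)
    qed
    also have "(\<integral>\<omega>. L * \<bar>X \<omega> - Y \<omega>\<bar> \<partial>M) = L * (\<integral>\<omega>. \<bar>X \<omega> - Y \<omega>\<bar> \<partial>M)" by simp
    also have "\<dots> \<le> L * (\<eta> / (L+1))" using nD nY L0 by (intro mult_left_mono) auto
    also have "\<dots> \<le> \<eta>" using L0 eta by (simp add: field_simps)
    finally show "\<alpha> \<le> (\<integral>\<omega>. u (max (X \<omega>) c) \<partial>M) + \<eta>" by simp
  qed
  define f where "f n \<omega> = K - u (max (X \<omega>) (- real n))" for n \<omega>
  have fi: "integrable M (f n)" for n unfolding f_def using ib[OF Xm, of "- real n"] by simp
  have finc: "incseq (\<lambda>n. integral\<^sup>L M (f n))"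
  proof (rule incseq_SucI)
    fix n show "integral\<^sup>L M (f n) \<le> integral\<^sup>L M (f (Suc n))"
      by (rule integral_mono[OF fi fi]) (auto simp: f_def intro!: utility_mono[OF U])
  qed
  have fbd: "integral\<^sup>L M (f n) \<le> K - \<alpha>" for n
    using step1[of "- real n"] ib[OF Xm, of "- real n"] by (simp add: f_def[abs_def] prob_space)
  have conv: "(\<lambda>n. integral\<^sup>L M (f n)) \<longlonglongrightarrow> (SUP n. integral\<^sup>L M (f n))"
    by (rule LIMSEQ_incseq_SUP[OF _ finc]) (use fbd in \<open>auto intro!: bdd_aboveI\<close>)
  have MC: "integrable M (\<lambda>\<omega>. K - u (X \<omega>)) \<and> (\<integral>\<omega>. K - u (X \<omega>) \<partial>M) = (SUP n. integral\<^sup>L M (f n))"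
  proof (intro conjI)
    show "integrable M (\<lambda>\<omega>. K - u (X \<omega>))"
      by (rule integral_monotone_convergence_nonneg(1)[OF fi _ _ _ conv])
         (auto simp: f_def mono_def K intro!: AE_I2 utility_mono[OF U] tendsto_eventually
               intro: max_eventually_g)
    show "(\<integral>\<omega>. K - u (X \<omega>) \<partial>M) = (SUP n. integral\<^sup>L M (f n))"
      by (rule integral_monotone_convergence_nonneg(2)[OF fi _ _ _ conv])
         (auto simp: f_def mono_def K intro!: AE_I2 utility_mono[OF U] tendsto_eventually
               intro: max_eventually_g)
  qed
  have "(SUP n. integral\<^sup>L M (f n)) \<le> K - \<alpha>" by (rule LIMSEQ_le_const2[OF conv]) (use fbd in auto)
  moreover have iU: "integrable M (\<lambda>\<omega>. u (X \<omega>))"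
  proof -
    have "integrable M (\<lambda>\<omega>. K - (K - u (X \<omega>)))"
      using Bochner_Integration.integrable_diff[OF integrable_const[of K] MC[THEN conjunct1]] .
    thus ?thesis by simp
  qed
  moreover have "(\<integral>\<omega>. K - u (X \<omega>) \<partial>M) = K - (\<integral>\<omega>. u (X \<omega>) \<partial>M)" using iU by (simp add: prob_space)
  ultimately show ?thesis using MC by auto
qed


lemma u_clamp_bound: assumes U: "utility u" "0 \<le> k" shows "\<bar>u (clamp k x)\<bar> \<le> \<bar>u x\<bar> + \<bar>u 0\<bar>"
proof -
  have "u (min x 0) \<le> u (clamp k x)" "u (clamp k x) \<le> u (max x 0)"
    using clamp_between[OF U(2), of x] utility_mono[OF U(1)] by auto
  moreover have "u (min x 0) = u x \<or> u (min x 0) = u 0" "u (max x 0) = u x \<or> u (max x 0) = u 0"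
    by (auto simp: min_def max_def)
  ultimately show ?thesis by linarith
qed

lemma ua_approx:
  assumes p: "1 \<le> p" and U: "utility u" and K: "\<And>x. u x \<le> K" and x0: "u x0 > \<alpha>"
    and XA: "X \<in> util_accept M u \<alpha> (Lp M p)" and e: "\<epsilon> > 0"
  shows "\<exists>Y\<in>util_accept M u \<alpha> (Linf M). Lp_norm M p (\<lambda>\<omega>. X \<omega> - Y \<omega>) < \<epsilon>"
proof -
  have uM[measurable]: "u \<in> borel_measurable borel" using U by (rule utility_meas)
  have XL: "X \<in> Lp M p" and iX: "integrable M (\<lambda>\<omega>. u (X \<omega>))" and aX: "\<alpha> \<le> (\<integral>\<omega>. u (X \<omega>) \<partial>M)"
    using XA by (auto simp: util_accept_def)
  have Xm[measurable]: "X \<in> borel_measurable M" using XL by (simp add: Lp_def)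
  define D where "D = Lp_norm M p (\<lambda>\<omega>. X \<omega> - x0)"
  have D0: "D \<ge> 0" by (simp add: D_def Lp_norm_nonneg)
  define l where "l = min 1 (\<epsilon> / (2*(D+1)))"
  have l0: "0 < l" "l \<le> 1" using e D0 by (auto simp: l_def)
  define Xl where "Xl \<omega> = (1-l) * X \<omega> + l * x0" for \<omega>
  have XlL: "Xl \<in> Lp M p" unfolding Xl_def using Lp_lin[OF p XL const_Lp[OF p, of x0], of "1-l" l] .
  have Xlm[measurable]: "Xl \<in> borel_measurable M" unfolding Xl_def by measurable
  have "Xl \<in> util_accept M u \<alpha> (Lp M p)" unfolding Xl_def
    by (rule ua_convex[OF U K XA, of "\<lambda>_. x0" l]) (use XlL[unfolded Xl_def] x0 l0 const_Lp[OF p, of x0] in \<open>auto simp: util_accept_def prob_space\<close>)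
  hence iXl: "integrable M (\<lambda>\<omega>. u (Xl \<omega>))" by (simp add: util_accept_def)
  have gt: "\<alpha> < (\<integral>\<omega>. u (Xl \<omega>) \<partial>M)"
  proof -
    have "\<alpha> < (1-l) * (\<integral>\<omega>. u (X \<omega>) \<partial>M) + l * u x0"
    proof -
      have "(1-l) * \<alpha> \<le> (1-l) * (\<integral>\<omega>. u (X \<omega>) \<partial>M)" using aX l0 by (intro mult_left_mono) auto
      moreover have "l * \<alpha> < l * u x0" using x0 l0 by simp
      ultimately show ?thesis by (simp add: algebra_simps)
    qed
    also have "\<dots> = (\<integral>\<omega>. (1-l) * u (X \<omega>) + l * u x0 \<partial>M)" using iX by (simp add: prob_space)
    also have "\<dots> \<le> (\<integral>\<omega>. u (Xl \<omega>) \<partial>M)"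
      by (rule integral_mono) (use iX iXl utility_concave[OF U less_imp_le[OF l0(1)] l0(2)] in \<open>auto simp: Xl_def\<close>)
    finally show ?thesis .
  qed
  have nXl: "Lp_norm M p (\<lambda>\<omega>. X \<omega> - Xl \<omega>) < \<epsilon>/2"
  proof -
    have "(\<lambda>\<omega>. X \<omega> - Xl \<omega>) = (\<lambda>\<omega>. l * (X \<omega> - x0))" by (auto simp: Xl_def algebra_simps)
    hence "Lp_norm M p (\<lambda>\<omega>. X \<omega> - Xl \<omega>) = l * D"
      using Lp_scale(2)[OF p Lp_diff[OF p XL const_Lp[OF p, of x0]], of l] l0 by (simp add: D_def)
    also have "\<dots> \<le> \<epsilon> / (2*(D+1)) * D" using D0 by (intro mult_right_mono) (auto simp: l_def)
    also have "\<dots> < \<epsilon>/2" using D0 e by (simp add: field_simps)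
    finally show ?thesis .
  qed
  have conv: "(\<lambda>n. \<integral>\<omega>. u (clamp (real n) (Xl \<omega>)) \<partial>M) \<longlonglongrightarrow> (\<integral>\<omega>. u (Xl \<omega>) \<partial>M)"
    and iC: "\<And>n. integrable M (\<lambda>\<omega>. u (clamp (real n) (Xl \<omega>)))"
  proof -
    have a: "AE x in M. (\<lambda>i. u (clamp (real i) (Xl x))) \<longlonglongrightarrow> u (Xl x)" by (intro AE_I2 clamp_lim)
    have b: "\<And>i. AE x in M. norm (u (clamp (real i) (Xl x))) \<le> \<bar>u (Xl x)\<bar> + \<bar>u 0\<bar>"
      using u_clamp_bound[OF U] by (intro AE_I2) auto
    have c: "integrable M (\<lambda>x. \<bar>u (Xl x)\<bar> + \<bar>u 0\<bar>)" using iXl by auto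
    show "(\<lambda>n. \<integral>\<omega>. u (clamp (real n) (Xl \<omega>)) \<partial>M) \<longlonglongrightarrow> (\<integral>\<omega>. u (Xl \<omega>) \<partial>M)"
      by (rule integral_dominated_convergence[OF _ _ c a b]) auto
    show "\<And>n. integrable M (\<lambda>\<omega>. u (clamp (real n) (Xl \<omega>)))"
      by (rule integrable_dominated_convergence2[OF _ _ c a b]) auto
  qed
  have ev1: "\<forall>\<^sub>F n in sequentially. \<alpha> < (\<integral>\<omega>. u (clamp (real n) (Xl \<omega>)) \<partial>M)"
    using order_tendstoD(1)[OF conv gt] .
  obtain N where N: "\<And>n. n \<ge> N \<Longrightarrow> Lp_norm M p (\<lambda>\<omega>. Xl \<omega> - clamp (real n) (Xl \<omega>)) < \<epsilon>/2"
    using Lp_density[OF p XlL, of "\<epsilon>/2"] e by auto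
  obtain n where n1: "\<alpha> < (\<integral>\<omega>. u (clamp (real n) (Xl \<omega>)) \<partial>M)" and n2: "n \<ge> N"
    using eventually_conj[OF ev1 eventually_ge_at_top[of N]] by (auto dest: eventually_happens)
  define Y where "Y \<omega> = clamp (real n) (Xl \<omega>)" for \<omega>
  have YI: "Y \<in> Linf M" unfolding Y_def by (rule clamp_Linf) auto
  hence YL: "Y \<in> Lp M p" by (rule Linf_Lp[OF p])
  have "Y \<in> util_accept M u \<alpha> (Linf M)" using YI iC[of n] n1 by (auto simp: util_accept_def Y_def)
  moreover have "Lp_norm M p (\<lambda>\<omega>. X \<omega> - Y \<omega>) < \<epsilon>"
  proof -
    have "Lp_norm M p (\<lambda>\<omega>. X \<omega> - Y \<omega>) \<le> Lp_norm M p (\<lambda>\<omega>. X \<omega> - Xl \<omega>) + Lp_norm M p (\<lambda>\<omega>. Xl \<omega> - Y \<omega>)"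
      by (rule Lp_tri[OF p XL XlL YL])
    also have "\<dots> < \<epsilon>" using nXl N[OF n2] by (simp add: Y_def)
    finally show ?thesis .
  qed
  ultimately show ?thesis by blast
qed

lemma part_i:
  assumes p: "1 \<le> p" and U: "utility u" and K: "\<And>x. u x \<le> K" and x0: "u x0 > \<alpha>"
  shows "Lp_closure M p (util_accept M u \<alpha> (Linf M)) = util_accept M u \<alpha> (Lp M p)"
proof
  show "Lp_closure M p (util_accept M u \<alpha> (Linf M)) \<subseteq> util_accept M u \<alpha> (Lp M p)"
  proof
    fix X assume X: "X \<in> Lp_closure M p (util_accept M u \<alpha> (Linf M))"
    hence XL: "X \<in> Lp M p" by (simp add: Lp_closure_def)
    have "integrable M (\<lambda>\<omega>. u (X \<omega>)) \<and> \<alpha> \<le> (\<integral>\<omega>. u (X \<omega>) \<partial>M)"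
    proof (rule ua_closed[OF p U K XL])
      fix e :: real assume "e > 0"
      then obtain Y where "Y \<in> util_accept M u \<alpha> (Linf M)" "Lp_norm M p (\<lambda>\<omega>. X \<omega> - Y \<omega>) < e"
        using X by (auto simp: Lp_closure_def)
      thus "\<exists>Y\<in>Lp M p. integrable M (\<lambda>\<omega>. u (Y \<omega>)) \<and> \<alpha> \<le> (\<integral>\<omega>. u (Y \<omega>) \<partial>M) \<and> Lp_norm M p (\<lambda>\<omega>. X \<omega> - Y \<omega>) < e"
        using Linf_Lp[OF p] by (auto simp: util_accept_def)
    qed
    thus "X \<in> util_accept M u \<alpha> (Lp M p)" using XL by (simp add: util_accept_def)
  qed
next
  show "util_accept M u \<alpha> (Lp M p) \<subseteq> Lp_closure M p (util_accept M u \<alpha> (Linf M))"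
    using ua_approx[OF p U K x0] by (auto simp: Lp_closure_def util_accept_def)
qed


lemma Linf_lin:
  assumes "X \<in> Linf M" "Y \<in> Linf M" shows "(\<lambda>\<omega>. a * X \<omega> + b * Y \<omega>) \<in> Linf M"
proof -
  obtain C1 C2 where [measurable]: "X \<in> borel_measurable M" "Y \<in> borel_measurable M"
    and C: "AE \<omega> in M. \<bar>X \<omega>\<bar> \<le> C1" "AE \<omega> in M. \<bar>Y \<omega>\<bar> \<le> C2" using assms by (auto simp: Linf_def)
  have "AE \<omega> in M. \<bar>a * X \<omega> + b * Y \<omega>\<bar> \<le> \<bar>a\<bar> * C1 + \<bar>b\<bar> * C2"
    using C(1) C(2)
  proof eventually_elim
    case (elim \<omega>)
    have "\<bar>a * X \<omega> + b * Y \<omega>\<bar> \<le> \<bar>a\<bar> * \<bar>X \<omega>\<bar> + \<bar>b\<bar> * \<bar>Y \<omega>\<bar>" by (simp add: abs_mult[symmetric] abs_triangle_ineq)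
    also have "\<dots> \<le> \<bar>a\<bar> * C1 + \<bar>b\<bar> * C2" using elim by (intro add_mono mult_left_mono) auto
    finally show ?case .
  qed
  thus ?thesis by (auto simp: Linf_def)
qed

lemma const_Linf: "(\<lambda>_. c) \<in> Linf M" by (auto simp: Linf_def intro!: exI[of _ "\<bar>c\<bar>"])

lemma Linf_meas: "X \<in> Linf M \<Longrightarrow> X \<in> borel_measurable M" by (simp add: Linf_def)

lemma ua_up:
  assumes U: "utility u" and K: "\<And>x. u x \<le> K" and S0: "S0 > 0" and STp: "AE \<omega> in M. ST \<omega> \<ge> 0"
    and A: "(\<lambda>\<omega>. X \<omega> + m' / S0 * ST \<omega>) \<in> util_accept M u \<alpha> P" and mm: "m' \<le> m"
    and P: "(\<lambda>\<omega>. X \<omega> + m / S0 * ST \<omega>) \<in> P" and Pm: "(\<lambda>\<omega>. X \<omega> + m / S0 * ST \<omega>) \<in> borel_measurable M"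
  shows "(\<lambda>\<omega>. X \<omega> + m / S0 * ST \<omega>) \<in> util_accept M u \<alpha> P"
proof (rule ua_mono[OF U K A P Pm])
  show "AE \<omega> in M. X \<omega> + m' / S0 * ST \<omega> \<le> X \<omega> + m / S0 * ST \<omega>"
    using STp by eventually_elim (use S0 mm in \<open>auto intro!: mult_right_mono divide_right_mono\<close>)
qed

end

locale rs = prob_space M for M :: "'a measure" +
  fixes p :: real and u :: "real \<Rightarrow> real" and K \<alpha> S0 :: real and ST :: "'a \<Rightarrow> real"
  assumes p: "1 \<le> p" and U: "utility u" and K: "\<And>x. u x \<le> K" and S0: "S0 > 0"
    and STI: "ST \<in> Linf M" and STp: "AE \<omega> in M. ST \<omega> \<ge> 0"
    and fin: "finite_valued_on (Linf M) (rho (util_accept M u \<alpha> (Linf M)) S0 ST)"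
begin

abbreviation "Ai \<equiv> util_accept M u \<alpha> (Linf M)"
abbreviation "Ap \<equiv> util_accept M u \<alpha> (Lp M p)"

lemma Ai_sub: "Ai \<subseteq> Ap" using Linf_Lp[OF p] by (auto simp: util_accept_def)

lemma STL: "ST \<in> Lp M p" using Linf_Lp[OF p STI] .

lemma sh_Lp: "X \<in> Lp M p \<Longrightarrow> (\<lambda>\<omega>. X \<omega> + m / S0 * ST \<omega>) \<in> Lp M p"
  using Lp_lin[OF p _ STL, of X 1 "m/S0"] by simp

lemma sh_Linf: "X \<in> Linf M \<Longrightarrow> (\<lambda>\<omega>. X \<omega> + m / S0 * ST \<omega>) \<in> Linf M"
  using Linf_lin[OF _ STI, of X 1 "m/S0"] by simp

lemma Lp_meas: "X \<in> Lp M p \<Longrightarrow> X \<in> borel_measurable M" by (simp add: Lp_def)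

lemma up_p: assumes X: "X \<in> Lp M p" and A: "(\<lambda>\<omega>. X \<omega> + m' / S0 * ST \<omega>) \<in> Ap" and mm: "m' \<le> m"
  shows "(\<lambda>\<omega>. X \<omega> + m / S0 * ST \<omega>) \<in> Ap"
  by (rule ua_up[OF U K S0 STp A mm sh_Lp[OF X] Lp_meas[OF sh_Lp[OF X]]])

lemma up_i: assumes X: "X \<in> Linf M" and A: "(\<lambda>\<omega>. X \<omega> + m' / S0 * ST \<omega>) \<in> Ai" and mm: "m' \<le> m"
  shows "(\<lambda>\<omega>. X \<omega> + m / S0 * ST \<omega>) \<in> Ai"
  by (rule ua_up[OF U K S0 STp A mm sh_Linf[OF X] Linf_meas[OF sh_Linf[OF X]]])

lemma rho_eq: "X \<in> Linf M \<Longrightarrow> rho Ap S0 ST X = rho Ai S0 ST X"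
proof -
  assume X: "X \<in> Linf M"
  have "(\<lambda>\<omega>. X \<omega> + m / S0 * ST \<omega>) \<in> Ap \<longleftrightarrow> (\<lambda>\<omega>. X \<omega> + m / S0 * ST \<omega>) \<in> Ai" for m
    using sh_Linf[OF X, of m] Linf_Lp[OF p] by (auto simp: util_accept_def)
  thus ?thesis unfolding rho_def by simp
qed

lemma lt_p: "X \<in> Lp M p \<Longrightarrow> rho Ap S0 ST X < ereal m \<Longrightarrow> (\<lambda>\<omega>. X \<omega> + m / S0 * ST \<omega>) \<in> Ap"
  using rho_lt[of Ap S0 ST X m] up_p[of X] by (auto dest: less_imp_le)

lemma lt_i: "X \<in> Linf M \<Longrightarrow> rho Ai S0 ST X < ereal m \<Longrightarrow> (\<lambda>\<omega>. X \<omega> + m / S0 * ST \<omega>) \<in> Ai"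
  using rho_lt[of Ai S0 ST X m] up_i[of X] by (auto dest: less_imp_le)

lemma fin_i_ex: "X \<in> Linf M \<Longrightarrow> \<exists>m. (\<lambda>\<omega>. X \<omega> + m / S0 * ST \<omega>) \<in> Ai"
proof -
  assume X: "X \<in> Linf M"
  have f: "\<bar>rho Ai S0 ST X\<bar> \<noteq> \<infinity>" using fin X by (auto simp: finite_valued_on_def)
  hence "rho Ai S0 ST X < ereal (real_of_ereal (rho Ai S0 ST X) + 1)"
    by (cases "rho Ai S0 ST X") auto
  thus ?thesis using lt_i[OF X] by blast
qed


lemma Ap_Lp: "X \<in> Ap \<Longrightarrow> X \<in> Lp M p" by (simp add: util_accept_def)

lemma conv_p: assumes "X \<in> Ap" "Y \<in> Ap" "0 \<le> t" "t \<le> 1"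
  shows "(\<lambda>\<omega>. (1-t)*X \<omega> + t*Y \<omega>) \<in> Ap"
  by (rule ua_convex[OF U K assms Lp_lin[OF p Ap_Lp[OF assms(1)] Ap_Lp[OF assms(2)]]
      Lp_meas[OF Ap_Lp[OF assms(1)]] Lp_meas[OF Ap_Lp[OF assms(2)]]])

lemma interior_bounded:
  assumes "Lp_interior M p Ap \<noteq> {}"
  obtains Z \<epsilon> where "Z \<in> Linf M" "\<epsilon> > 0" "\<And>Y. Y \<in> Lp M p \<Longrightarrow> Lp_norm M p (\<lambda>\<omega>. Y \<omega> - Z \<omega>) < \<epsilon> \<Longrightarrow> Y \<in> Ap"
proof -
  obtain Z0 e where Z0: "Z0 \<in> Lp M p" and e: "e > 0" and B: "\<And>Y. Y \<in> Lp M p \<Longrightarrow> Lp_norm M p (\<lambda>\<omega>. Y \<omega> - Z0 \<omega>) < e \<Longrightarrow> Y \<in> Ap"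
    using assms by (auto simp: Lp_interior_def)
  obtain Z where Z: "Z \<in> Linf M" and nZ: "Lp_norm M p (\<lambda>\<omega>. Z0 \<omega> - Z \<omega>) < e/2"
    using Lp_dense[OF p Z0, of "e/2"] e by auto
  have ZL: "Z \<in> Lp M p" using Linf_Lp[OF p Z] .
  show ?thesis
  proof (rule that[OF Z, of "e/2"])
    fix Y assume Y: "Y \<in> Lp M p" and nY: "Lp_norm M p (\<lambda>\<omega>. Y \<omega> - Z \<omega>) < e/2"
    have "Lp_norm M p (\<lambda>\<omega>. Y \<omega> - Z0 \<omega>) \<le> Lp_norm M p (\<lambda>\<omega>. Y \<omega> - Z \<omega>) + Lp_norm M p (\<lambda>\<omega>. Z \<omega> - Z0 \<omega>)"
      by (rule Lp_tri[OF p Y ZL Z0])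
    also have "\<dots> < e" using nY nZ Lp_norm_commute[of p Z0 Z] by simp
    finally show "Y \<in> Ap" using B[OF Y] by simp
  qed (use e in auto)
qed

lemma fin_upper:
  assumes Z: "Z \<in> Linf M" and e: "\<epsilon> > 0" and B: "\<And>Y. Y \<in> Lp M p \<Longrightarrow> Lp_norm M p (\<lambda>\<omega>. Y \<omega> - Z \<omega>) < \<epsilon> \<Longrightarrow> Y \<in> Ap"
    and X: "X \<in> Lp M p"
  shows "\<exists>m. (\<lambda>\<omega>. X \<omega> + m / S0 * ST \<omega>) \<in> Ap"
proof -
  obtain Bd where Bd: "Bd \<in> Linf M" and nB: "Lp_norm M p (\<lambda>\<omega>. X \<omega> - Bd \<omega>) < \<epsilon>/2"
    using Lp_dense[OF p X, of "\<epsilon>/2"] e by auto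
  have BdL: "Bd \<in> Lp M p" and ZL: "Z \<in> Lp M p" using Linf_Lp[OF p] Bd Z by auto
  define W where "W \<omega> = 2 * Bd \<omega> + (-1) * Z \<omega>" for \<omega>
  have W: "W \<in> Linf M" unfolding W_def by (rule Linf_lin[OF Bd Z])
  obtain m where m: "(\<lambda>\<omega>. W \<omega> + m / S0 * ST \<omega>) \<in> Ai" using fin_i_ex[OF W] by auto
  define Y1 where "Y1 \<omega> = Z \<omega> + 2 * (X \<omega> - Bd \<omega>)" for \<omega>
  have DL: "(\<lambda>\<omega>. X \<omega> - Bd \<omega>) \<in> Lp M p" by (rule Lp_diff[OF p X BdL])
  have Y1L: "Y1 \<in> Lp M p" unfolding Y1_def using Lp_lin[OF p ZL DL, of 1 2] by simp
  have "Lp_norm M p (\<lambda>\<omega>. Y1 \<omega> - Z \<omega>) = Lp_norm M p (\<lambda>\<omega>. 2 * (X \<omega> - Bd \<omega>))" by (simp add: Y1_def)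
  also have "\<dots> = 2 * Lp_norm M p (\<lambda>\<omega>. X \<omega> - Bd \<omega>)" using Lp_scale(2)[OF p DL, of 2] by simp
  also have "\<dots> < \<epsilon>" using nB by simp
  finally have Y1A: "Y1 \<in> Ap" using B[OF Y1L] by simp
  have Y2A: "(\<lambda>\<omega>. W \<omega> + m / S0 * ST \<omega>) \<in> Ap" using m Ai_sub by auto
  have "(\<lambda>\<omega>. (1-1/2)*Y1 \<omega> + 1/2*(W \<omega> + m / S0 * ST \<omega>)) \<in> Ap"
    by (rule conv_p[OF Y1A Y2A]) auto
  moreover have "(\<lambda>\<omega>. (1-1/2)*Y1 \<omega> + 1/2*(W \<omega> + m / S0 * ST \<omega>)) = (\<lambda>\<omega>. X \<omega> + (m/2) / S0 * ST \<omega>)"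
    using S0 by (auto simp: Y1_def W_def field_simps)
  ultimately have "(\<lambda>\<omega>. X \<omega> + (m/2) / S0 * ST \<omega>) \<in> Ap" by (simp only:)
  thus ?thesis by blast
qed

lemma fin_p:
  assumes Z: "Z \<in> Linf M" and e: "\<epsilon> > 0" and B: "\<And>Y. Y \<in> Lp M p \<Longrightarrow> Lp_norm M p (\<lambda>\<omega>. Y \<omega> - Z \<omega>) < \<epsilon> \<Longrightarrow> Y \<in> Ap"
    and X: "X \<in> Lp M p"
  shows "\<bar>rho Ap S0 ST X\<bar> \<noteq> \<infinity>"
proof -
  obtain m1 where m1: "(\<lambda>\<omega>. X \<omega> + m1 / S0 * ST \<omega>) \<in> Ap" using fin_upper[OF Z e B X] by auto
  have nX: "(\<lambda>\<omega>. - X \<omega>) \<in> Lp M p" using Lp_scale(1)[OF p X, of "-1"] by simp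
  obtain m2 where m2: "(\<lambda>\<omega>. - X \<omega> + m2 / S0 * ST \<omega>) \<in> Ap" using fin_upper[OF Z e B nX] by auto
  have "\<exists>m0. (\<lambda>\<omega>. X \<omega> + m0 / S0 * ST \<omega>) \<notin> Ap"
  proof (rule ccontr)
    assume "\<not> ?thesis"
    hence all: "\<And>m. (\<lambda>\<omega>. X \<omega> + m / S0 * ST \<omega>) \<in> Ap" by auto
    have z: "(\<lambda>\<omega>. 0 + m / S0 * ST \<omega>) \<in> Ai" for m
    proof -
      have "(\<lambda>\<omega>. (1-1/2) * (X \<omega> + (2*m - m2) / S0 * ST \<omega>) + 1/2 * (- X \<omega> + m2 / S0 * ST \<omega>)) \<in> Ap"
        by (rule conv_p[OF all m2]) auto
      moreover have "(\<lambda>\<omega>. (1-1/2) * (X \<omega> + (2*m - m2) / S0 * ST \<omega>) + 1/2 * (- X \<omega> + m2 / S0 * ST \<omega>)) = (\<lambda>\<omega>. 0 + m / S0 * ST \<omega>)"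
        using S0 by (auto simp: field_simps)
      ultimately have "(\<lambda>\<omega>. 0 + m / S0 * ST \<omega>) \<in> Ap" by (simp only:)
      moreover have "(\<lambda>\<omega>. 0 + m / S0 * ST \<omega>) \<in> Linf M" using sh_Linf[OF const_Linf[of 0]] by simp
      ultimately show ?thesis by (auto simp: util_accept_def)
    qed
    have "rho Ai S0 ST (\<lambda>_. 0) = -\<infinity>"
    proof -
      have "rho Ai S0 ST (\<lambda>_. 0) \<le> ereal m" for m using rho_le[of "\<lambda>_. 0" m S0 ST Ai] z[of m] by simp
      thus ?thesis by (meson ereal_bot)
    qed
    moreover have "\<bar>rho Ai S0 ST (\<lambda>_. 0)\<bar> \<noteq> \<infinity>" using fin const_Linf[of 0] by (auto simp: finite_valued_on_def)
    ultimately show False by simp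
  qed
  then obtain m0 where m0: "(\<lambda>\<omega>. X \<omega> + m0 / S0 * ST \<omega>) \<notin> Ap" by auto
  have lo: "ereal m0 \<le> rho Ap S0 ST X"
  proof (rule rho_ge)
    fix m assume "(\<lambda>\<omega>. X \<omega> + m / S0 * ST \<omega>) \<in> Ap"
    thus "m0 \<le> m" using up_p[OF X, of m m0] m0 by force
  qed
  have hi: "rho Ap S0 ST X \<le> ereal m1" by (rule rho_le[OF m1])
  show ?thesis using lo hi by auto
qed


context
  fixes Z \<epsilon> assumes Z: "Z \<in> Linf M" and e: "\<epsilon> > 0"
    and B: "\<And>Y. Y \<in> Lp M p \<Longrightarrow> Lp_norm M p (\<lambda>\<omega>. Y \<omega> - Z \<omega>) < \<epsilon> \<Longrightarrow> Y \<in> Ap"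
begin

abbreviation "r X \<equiv> real_of_ereal (rho Ap S0 ST X)"

lemma r1: assumes X: "X \<in> Lp M p" and A: "(\<lambda>\<omega>. X \<omega> + m / S0 * ST \<omega>) \<in> Ap" shows "r X \<le> m"
proof -
  have "rho Ap S0 ST X \<le> ereal m" by (rule rho_le[OF A])
  thus ?thesis using fin_p[OF Z e B X] by (cases "rho Ap S0 ST X") auto
qed

lemma r2: assumes X: "X \<in> Lp M p" and lt: "r X < m" shows "(\<lambda>\<omega>. X \<omega> + m / S0 * ST \<omega>) \<in> Ap"
proof (rule lt_p[OF X])
  show "rho Ap S0 ST X < ereal m" using lt fin_p[OF Z e B X] by (cases "rho Ap S0 ST X") auto
qed

lemma rconv:
  assumes X: "X \<in> Lp M p" and Y: "Y \<in> Lp M p" and t: "0 \<le> t" "t \<le> 1"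
  shows "r (\<lambda>\<omega>. (1-t) * X \<omega> + t * Y \<omega>) \<le> (1-t) * r X + t * r Y"
proof (rule field_le_epsilon)
  fix \<eta> :: real assume eta: "0 < \<eta>"
  have a: "(\<lambda>\<omega>. X \<omega> + (r X + \<eta>) / S0 * ST \<omega>) \<in> Ap" using r2[OF X] eta by simp
  have b: "(\<lambda>\<omega>. Y \<omega> + (r Y + \<eta>) / S0 * ST \<omega>) \<in> Ap" using r2[OF Y] eta by simp
  have "(\<lambda>\<omega>. (1-t) * (X \<omega> + (r X + \<eta>) / S0 * ST \<omega>) + t * (Y \<omega> + (r Y + \<eta>) / S0 * ST \<omega>)) \<in> Ap"
    by (rule conv_p[OF a b t])
  moreover have "(\<lambda>\<omega>. (1-t) * (X \<omega> + (r X + \<eta>) / S0 * ST \<omega>) + t * (Y \<omega> + (r Y + \<eta>) / S0 * ST \<omega>))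
     = (\<lambda>\<omega>. (\<lambda>\<omega>. (1-t) * X \<omega> + t * Y \<omega>) \<omega> + ((1-t) * r X + t * r Y + \<eta>) / S0 * ST \<omega>)"
    using S0 by (auto simp: field_simps)
  ultimately have "(\<lambda>\<omega>. (\<lambda>\<omega>. (1-t) * X \<omega> + t * Y \<omega>) \<omega> + ((1-t) * r X + t * r Y + \<eta>) / S0 * ST \<omega>) \<in> Ap"
    by (simp only:)
  from r1[OF Lp_lin[OF p X Y] this] show "r (\<lambda>\<omega>. (1-t) * X \<omega> + t * Y \<omega>) \<le> (1-t) * r X + t * r Y + \<eta>" by simp
qed

lemma rball: "Y \<in> Lp M p \<Longrightarrow> Lp_norm M p (\<lambda>\<omega>. Y \<omega> - Z \<omega>) < \<epsilon> \<Longrightarrow> r Y \<le> 0"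
  using r1[of Y 0] B[of Y] by simp

lemma r_cont: "Lp_continuous M p (rho Ap S0 ST)"
  unfolding Lp_continuous_def
proof (intro ballI allI impI)
  fix X and \<eta> :: real assume X: "X \<in> Lp M p" and eta: "\<eta> > 0"
  have ZL: "Z \<in> Lp M p" using Linf_Lp[OF p Z] .
  define W where "W \<omega> = 2 * X \<omega> + (-1) * Z \<omega>" for \<omega>
  have WL: "W \<in> Lp M p" unfolding W_def by (rule Lp_lin[OF p X ZL])
  define C where "C = r W / 2"
  have bound: "r Y \<le> C" if Y: "Y \<in> Lp M p" and nY: "Lp_norm M p (\<lambda>\<omega>. Y \<omega> - X \<omega>) < \<epsilon>/2" for Y
  proof -
    have DL: "(\<lambda>\<omega>. Y \<omega> - X \<omega>) \<in> Lp M p" by (rule Lp_diff[OF p Y X])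
    define V where "V \<omega> = Z \<omega> + 2 * (Y \<omega> - X \<omega>)" for \<omega>
    have VL: "V \<in> Lp M p" unfolding V_def using Lp_lin[OF p ZL DL, of 1 2] by simp
    have "Lp_norm M p (\<lambda>\<omega>. V \<omega> - Z \<omega>) = Lp_norm M p (\<lambda>\<omega>. 2 * (Y \<omega> - X \<omega>))" by (simp add: V_def)
    also have "\<dots> = 2 * Lp_norm M p (\<lambda>\<omega>. Y \<omega> - X \<omega>)" using Lp_scale(2)[OF p DL, of 2] by simp
    also have "\<dots> < \<epsilon>" using nY by simp
    finally have rV: "r V \<le> 0" by (rule rball[OF VL])
    have "Y = (\<lambda>\<omega>. (1 - 1/2) * W \<omega> + 1/2 * V \<omega>)" by (auto simp: W_def V_def field_simps)
    hence "r Y = r (\<lambda>\<omega>. (1 - 1/2) * W \<omega> + 1/2 * V \<omega>)" by simp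
    also have "\<dots> \<le> (1 - 1/2) * r W + 1/2 * r V" by (rule rconv[OF WL VL]) auto
    also have "\<dots> \<le> C" using rV by (simp add: C_def)
    finally show ?thesis .
  qed
  have rXC: "r X \<le> C" using bound[OF X] e by (simp add: Lp_norm_def)
  define D where "D = C - r X"
  have D0: "D \<ge> 0" using rXC by (simp add: D_def)
  define s where "s = min 1 (\<eta> / (D + 1))"
  have s0: "0 < s" "s \<le> 1" using eta D0 by (auto simp: s_def)
  have sD: "s * D < \<eta>"
  proof -
    have "s * D \<le> \<eta> / (D + 1) * D" using D0 by (intro mult_right_mono) (auto simp: s_def)
    also have "\<dots> < \<eta>" using D0 eta by (simp add: field_simps)
    finally show ?thesis .
  qed
  show "\<exists>\<delta>>0. \<forall>Y\<in>Lp M p. Lp_norm M p (\<lambda>\<omega>. Y \<omega> - X \<omega>) < \<delta> \<longrightarrow>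
           \<bar>real_of_ereal (rho Ap S0 ST Y) - real_of_ereal (rho Ap S0 ST X)\<bar> < \<eta>"
  proof (intro exI[of _ "s * \<epsilon> / 2"] conjI ballI impI)
    show "0 < s * \<epsilon> / 2" using s0 e by simp
    fix Y assume Y: "Y \<in> Lp M p" and nY: "Lp_norm M p (\<lambda>\<omega>. Y \<omega> - X \<omega>) < s * \<epsilon> / 2"
    have DL: "(\<lambda>\<omega>. Y \<omega> - X \<omega>) \<in> Lp M p" by (rule Lp_diff[OF p Y X])
    define k1 where "k1 \<omega> = X \<omega> + (1/s) * (Y \<omega> - X \<omega>)" for \<omega>
    define k2 where "k2 \<omega> = X \<omega> + (-1/s) * (Y \<omega> - X \<omega>)" for \<omega>
    have k1L: "k1 \<in> Lp M p" unfolding k1_def using Lp_lin[OF p X DL, of 1 "1/s"] by simp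
    have k2L: "k2 \<in> Lp M p" unfolding k2_def using Lp_lin[OF p X DL, of 1 "-1/s"] by simp
    have nk: "Lp_norm M p (\<lambda>\<omega>. (c/s) * (Y \<omega> - X \<omega>)) < \<epsilon>/2" if "\<bar>c\<bar> = 1" for c
    proof -
      have "Lp_norm M p (\<lambda>\<omega>. (c/s) * (Y \<omega> - X \<omega>)) = (1/s) * Lp_norm M p (\<lambda>\<omega>. Y \<omega> - X \<omega>)"
        using Lp_scale(2)[OF p DL, of "c/s"] that s0 by simp
      also have "\<dots> < (1/s) * (s * \<epsilon> / 2)" using nY s0 by (intro mult_strict_left_mono) auto
      also have "\<dots> = \<epsilon>/2" using s0 by simp
      finally show ?thesis .
    qed
    have rk1: "r k1 \<le> C" using bound[OF k1L] nk[of 1] by (simp add: k1_def)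
    have rk2: "r k2 \<le> C" using bound[OF k2L] nk[of "-1"] by (simp add: k2_def)
    have up: "r Y \<le> r X + s * D"
    proof -
      have "Y = (\<lambda>\<omega>. (1-s) * X \<omega> + s * k1 \<omega>)" using s0 by (auto simp: k1_def field_simps)
      hence "r Y = r (\<lambda>\<omega>. (1-s) * X \<omega> + s * k1 \<omega>)" by simp
      also have "\<dots> \<le> (1-s) * r X + s * r k1" by (rule rconv[OF X k1L]) (use s0 in auto)
      also have "\<dots> \<le> (1-s) * r X + s * C" using rk1 s0 by (intro add_left_mono mult_left_mono) auto
      also have "\<dots> = r X + s * D" by (simp add: D_def algebra_simps)
      finally show ?thesis .
    qed
    have lo: "r X - s * D \<le> r Y"
    proof -
      define Y' where "Y' \<omega> = 2 * X \<omega> + (-1) * Y \<omega>" for \<omega>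
      have Y'L: "Y' \<in> Lp M p" unfolding Y'_def by (rule Lp_lin[OF p X Y])
      have "Y' = (\<lambda>\<omega>. (1-s) * X \<omega> + s * k2 \<omega>)" using s0 by (auto simp: Y'_def k2_def field_simps)
      hence "r Y' = r (\<lambda>\<omega>. (1-s) * X \<omega> + s * k2 \<omega>)" by simp
      also have "\<dots> \<le> (1-s) * r X + s * r k2" by (rule rconv[OF X k2L]) (use s0 in auto)
      also have "\<dots> \<le> (1-s) * r X + s * C" using rk2 s0 by (intro add_left_mono mult_left_mono) auto
      also have "\<dots> = r X + s * D" by (simp add: D_def algebra_simps)
      finally have rY': "r Y' \<le> r X + s * D" .
      have "X = (\<lambda>\<omega>. (1 - 1/2) * Y \<omega> + (1/2) * Y' \<omega>)" by (rule ext) (simp add: Y'_def field_simps)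
      hence "r X = r (\<lambda>\<omega>. (1 - 1/2) * Y \<omega> + (1/2) * Y' \<omega>)" by simp
      also have "\<dots> \<le> (1 - 1/2) * r Y + (1/2) * r Y'" by (rule rconv[OF Y Y'L]) auto
      finally show ?thesis using rY' by simp
    qed
    show "\<bar>real_of_ereal (rho Ap S0 ST Y) - real_of_ereal (rho Ap S0 ST X)\<bar> < \<eta>"
      using up lo sD by linarith
  qed
qed

end


lemma ext_Ap:
  assumes I: "Lp_interior M p Ap \<noteq> {}"
  shows "is_Lp_extension M p S0 ST Ap (rho Ai S0 ST)"
proof (rule interior_bounded[OF I])
  fix Z \<epsilon> assume Z: "Z \<in> Linf M" and e: "\<epsilon> > 0"
    and B: "\<And>Y. Y \<in> Lp M p \<Longrightarrow> Lp_norm M p (\<lambda>\<omega>. Y \<omega> - Z \<omega>) < \<epsilon> \<Longrightarrow> Y \<in> Ap"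
  show ?thesis unfolding is_Lp_extension_def
    using fin_p[OF Z e B] r_cont[OF Z e B] rho_eq
    by (auto simp: finite_valued_on_def util_accept_def)
qed

lemma ext_unique:
  assumes I: "Lp_interior M p Ap \<noteq> {}" and E: "is_Lp_extension M p S0 ST B (rho Ai S0 ST)"
    and X: "X \<in> Lp M p"
  shows "rho B S0 ST X = rho Ap S0 ST X"
proof -
  have EA: "is_Lp_extension M p S0 ST Ap (rho Ai S0 ST)" by (rule ext_Ap[OF I])
  have fB: "\<bar>rho B S0 ST X\<bar> \<noteq> \<infinity>" and fA: "\<bar>rho Ap S0 ST X\<bar> \<noteq> \<infinity>"
    using E EA X by (auto simp: is_Lp_extension_def finite_valued_on_def)
  have "real_of_ereal (rho B S0 ST X) = real_of_ereal (rho Ap S0 ST X)"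
  proof (rule ccontr)
    assume ne: "\<not> ?thesis"
    define \<eta> where "\<eta> = \<bar>real_of_ereal (rho B S0 ST X) - real_of_ereal (rho Ap S0 ST X)\<bar> / 2"
    have eta: "\<eta> > 0" using ne by (simp add: \<eta>_def)
    obtain d1 where d1: "d1 > 0" "\<And>Y. Y \<in> Lp M p \<Longrightarrow> Lp_norm M p (\<lambda>\<omega>. Y \<omega> - X \<omega>) < d1 \<Longrightarrow>
        \<bar>real_of_ereal (rho B S0 ST Y) - real_of_ereal (rho B S0 ST X)\<bar> < \<eta>"
    proof -
      have "Lp_continuous M p (rho B S0 ST)" using E by (simp add: is_Lp_extension_def)
      from this[unfolded Lp_continuous_def, rule_format, OF X eta] obtain d where
        "d > 0" "\<forall>Y\<in>Lp M p. Lp_norm M p (\<lambda>\<omega>. Y \<omega> - X \<omega>) < d \<longrightarrow>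
        \<bar>real_of_ereal (rho B S0 ST Y) - real_of_ereal (rho B S0 ST X)\<bar> < \<eta>" by auto
      thus ?thesis using that by auto
    qed
    obtain d2 where d2: "d2 > 0" "\<And>Y. Y \<in> Lp M p \<Longrightarrow> Lp_norm M p (\<lambda>\<omega>. Y \<omega> - X \<omega>) < d2 \<Longrightarrow>
        \<bar>real_of_ereal (rho Ap S0 ST Y) - real_of_ereal (rho Ap S0 ST X)\<bar> < \<eta>"
    proof -
      have "Lp_continuous M p (rho Ap S0 ST)" using EA by (simp add: is_Lp_extension_def)
      from this[unfolded Lp_continuous_def, rule_format, OF X eta] obtain d where
        "d > 0" "\<forall>Y\<in>Lp M p. Lp_norm M p (\<lambda>\<omega>. Y \<omega> - X \<omega>) < d \<longrightarrow>
        \<bar>real_of_ereal (rho Ap S0 ST Y) - real_of_ereal (rho Ap S0 ST X)\<bar> < \<eta>" by auto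
      thus ?thesis using that by auto
    qed
    obtain Y where Y: "Y \<in> Linf M" and nY: "Lp_norm M p (\<lambda>\<omega>. X \<omega> - Y \<omega>) < min d1 d2"
      using Lp_dense[OF p X, of "min d1 d2"] d1 d2 by auto
    have YL: "Y \<in> Lp M p" using Linf_Lp[OF p Y] .
    have nY': "Lp_norm M p (\<lambda>\<omega>. Y \<omega> - X \<omega>) < min d1 d2" using nY Lp_norm_commute[of p X Y] by simp
    have eq: "rho B S0 ST Y = rho Ap S0 ST Y" using E EA Y by (auto simp: is_Lp_extension_def)
    have "\<bar>real_of_ereal (rho B S0 ST X) - real_of_ereal (rho Ap S0 ST X)\<bar> < 2 * \<eta>"
      using d1(2)[OF YL] d2(2)[OF YL] nY' eq by auto
    thus False by (simp add: \<eta>_def)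
  qed
  thus ?thesis using fA fB by (cases "rho B S0 ST X"; cases "rho Ap S0 ST X") auto
qed

lemma ext_interior:
  assumes x0: "u x0 > \<alpha>" and E: "is_Lp_extension M p S0 ST B (rho Ai S0 ST)"
  shows "Lp_interior M p Ap \<noteq> {}"
proof -
  obtain m where m: "(\<lambda>\<omega>. (\<lambda>_. 0) \<omega> + m / S0 * ST \<omega>) \<in> Ai" using fin_i_ex[OF const_Linf[of 0]] by blast
  define X0 where "X0 \<omega> = (\<lambda>_. 0) \<omega> + (m + 1) / S0 * ST \<omega>" for \<omega>
  have X0I: "X0 \<in> Linf M" unfolding X0_def by (rule sh_Linf[OF const_Linf])
  have X0L: "X0 \<in> Lp M p" using Linf_Lp[OF p X0I] .
  have "(\<lambda>\<omega>. X0 \<omega> + (-1) / S0 * ST \<omega>) = (\<lambda>\<omega>. (\<lambda>_. 0) \<omega> + m / S0 * ST \<omega>)"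
    using S0 by (auto simp: X0_def field_simps)
  hence "(\<lambda>\<omega>. X0 \<omega> + (-1) / S0 * ST \<omega>) \<in> Ai" using m by simp
  hence "rho Ai S0 ST X0 \<le> ereal (-1)" by (rule rho_le)
  hence rB0: "rho B S0 ST X0 \<le> ereal (-1)" using E X0I by (auto simp: is_Lp_extension_def)
  have finB: "\<And>Y. Y \<in> Lp M p \<Longrightarrow> \<bar>rho B S0 ST Y\<bar> \<noteq> \<infinity>" using E by (auto simp: is_Lp_extension_def finite_valued_on_def)
  have rB0': "real_of_ereal (rho B S0 ST X0) \<le> -1" using rB0 finB[OF X0L] by (cases "rho B S0 ST X0") auto
  obtain \<delta> where d: "\<delta> > 0" "\<And>Y. Y \<in> Lp M p \<Longrightarrow> Lp_norm M p (\<lambda>\<omega>. Y \<omega> - X0 \<omega>) < \<delta> \<Longrightarrow>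
        \<bar>real_of_ereal (rho B S0 ST Y) - real_of_ereal (rho B S0 ST X0)\<bar> < 1"
  proof -
    have "Lp_continuous M p (rho B S0 ST)" using E by (simp add: is_Lp_extension_def)
    from this[unfolded Lp_continuous_def, rule_format, OF X0L zero_less_one] obtain d where
        "d > 0" "\<forall>Y\<in>Lp M p. Lp_norm M p (\<lambda>\<omega>. Y \<omega> - X0 \<omega>) < d \<longrightarrow>
        \<bar>real_of_ereal (rho B S0 ST Y) - real_of_ereal (rho B S0 ST X0)\<bar> < 1" by auto
    thus ?thesis using that by auto
  qed
  have neg: "rho B S0 ST Y < ereal 0" if "Y \<in> Lp M p" "Lp_norm M p (\<lambda>\<omega>. Y \<omega> - X0 \<omega>) < \<delta>" for Y
  proof -
    have "real_of_ereal (rho B S0 ST Y) < 0" using d(2)[OF that] rB0' by linarith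
    thus ?thesis using finB[OF that(1)] by (cases "rho B S0 ST Y") auto
  qed
  have ball: "Y \<in> Ap" if Y: "Y \<in> Lp M p" and nY: "Lp_norm M p (\<lambda>\<omega>. Y \<omega> - X0 \<omega>) < \<delta>" for Y
  proof -
    have "Y \<in> Lp_closure M p Ai"
      unfolding Lp_closure_def
    proof (intro CollectI conjI allI impI Y)
      fix \<gamma> :: real assume g: "\<gamma> > 0"
      define \<gamma>' where "\<gamma>' = min \<gamma> (\<delta> - Lp_norm M p (\<lambda>\<omega>. Y \<omega> - X0 \<omega>))"
      have g': "\<gamma>' > 0" using g nY by (simp add: \<gamma>'_def)
      obtain Y' where Y': "Y' \<in> Linf M" and nY': "Lp_norm M p (\<lambda>\<omega>. Y \<omega> - Y' \<omega>) < \<gamma>'"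
        using Lp_dense[OF p Y g'] by auto
      have Y'L: "Y' \<in> Lp M p" using Linf_Lp[OF p Y'] .
      have "Lp_norm M p (\<lambda>\<omega>. Y' \<omega> - X0 \<omega>) \<le> Lp_norm M p (\<lambda>\<omega>. Y' \<omega> - Y \<omega>) + Lp_norm M p (\<lambda>\<omega>. Y \<omega> - X0 \<omega>)"
        by (rule Lp_tri[OF p Y'L Y X0L])
      also have "\<dots> < \<delta>" using nY' Lp_norm_commute[of p Y Y'] by (simp add: \<gamma>'_def)
      finally have "rho B S0 ST Y' < ereal 0" by (rule neg[OF Y'L])
      hence "rho Ai S0 ST Y' < ereal 0" using E Y' by (auto simp: is_Lp_extension_def)
      hence "(\<lambda>\<omega>. Y' \<omega> + 0 / S0 * ST \<omega>) \<in> Ai" by (rule lt_i[OF Y'])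
      hence "Y' \<in> Ai" by simp
      moreover have "Lp_norm M p (\<lambda>\<omega>. Y \<omega> - Y' \<omega>) < \<gamma>" using nY' by (simp add: \<gamma>'_def)
      ultimately show "\<exists>Y'\<in>Ai. Lp_norm M p (\<lambda>\<omega>. Y \<omega> - Y' \<omega>) < \<gamma>" by blast
    qed
    thus "Y \<in> Ap" using part_i[OF p U K x0] by simp
  qed
  have "Lp_norm M p (\<lambda>\<omega>. X0 \<omega> - X0 \<omega>) = 0" using p by (simp add: Lp_norm_def)
  hence "X0 \<in> Ap" using ball[OF X0L] d(1) by simp
  hence "X0 \<in> Lp_interior M p Ap" unfolding Lp_interior_def
    by (intro CollectI conjI IntI exI[of _ \<delta>] ballI impI X0L d(1)) (auto intro: ball)
  thus ?thesis by auto
qed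

end

theorem theorem6p6:
  fixes M :: "'a measure" and u :: "real \<Rightarrow> real" and \<alpha> p S0 :: real
    and ST :: "'a \<Rightarrow> real"
  assumes "prob_space M" and "nonatomic M"
    and "utility u" and "\<exists>K. \<forall>x. u x \<le> K" and "\<exists>x. u x > \<alpha>"
    and "1 \<le> p"
  shows "Lp_closure M p (util_accept M u \<alpha> (Linf M)) = util_accept M u \<alpha> (Lp M p)
    \<and> ((traded_asset M S0 ST \<and> ST \<in> Linf M \<and>
         finite_valued_on (Linf M) (rho (util_accept M u \<alpha> (Linf M)) S0 ST)) \<longrightarrow>
        ((\<exists>B. is_Lp_extension M p S0 ST B (rho (util_accept M u \<alpha> (Linf M)) S0 ST))
           \<longleftrightarrow> Lp_interior M p (util_accept M u \<alpha> (Lp M p)) \<noteq> {})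
        \<and> (Lp_interior M p (util_accept M u \<alpha> (Lp M p)) \<noteq> {} \<longrightarrow>
             is_Lp_extension M p S0 ST (util_accept M u \<alpha> (Lp M p))
               (rho (util_accept M u \<alpha> (Linf M)) S0 ST)
           \<and> (\<forall>B. is_Lp_extension M p S0 ST B (rho (util_accept M u \<alpha> (Linf M)) S0 ST) \<longrightarrow>
                (\<forall>X\<in>Lp M p. rho B S0 ST X = rho (util_accept M u \<alpha> (Lp M p)) S0 ST X))))"
proof -
  obtain K where K: "\<And>x. u x \<le> K" using assms(4) by auto
  obtain x0 where x0: "u x0 > \<alpha>" using assms(5) by auto
  have i: "Lp_closure M p (util_accept M u \<alpha> (Linf M)) = util_accept M u \<alpha> (Lp M p)"
    using prob_space.part_i[OF assms(1) assms(6) assms(3) K x0] .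
  show ?thesis
  proof (intro conjI impI i)
    assume H: "traded_asset M S0 ST \<and> ST \<in> Linf M \<and> finite_valued_on (Linf M) (rho (util_accept M u \<alpha> (Linf M)) S0 ST)"
    have S0: "S0 > 0" and STp: "AE \<omega> in M. ST \<omega> \<ge> 0" and STI: "ST \<in> Linf M"
      and fin: "finite_valued_on (Linf M) (rho (util_accept M u \<alpha> (Linf M)) S0 ST)"
      using H by (auto simp: traded_asset_def)
    interpret rs M p u K \<alpha> S0 ST
      by (rule rs.intro[OF assms(1)], rule rs_axioms.intro[OF assms(6) assms(3) K S0 STI STp fin])
    show "(\<exists>B. is_Lp_extension M p S0 ST B (rho Ai S0 ST)) \<longleftrightarrow> Lp_interior M p Ap \<noteq> {}"
    proof
      assume "\<exists>B. is_Lp_extension M p S0 ST B (rho Ai S0 ST)"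
      then obtain B where "is_Lp_extension M p S0 ST B (rho Ai S0 ST)" by auto
      thus "Lp_interior M p Ap \<noteq> {}" by (rule ext_interior[OF x0])
    next
      assume "Lp_interior M p Ap \<noteq> {}"
      thus "\<exists>B. is_Lp_extension M p S0 ST B (rho Ai S0 ST)" using ext_Ap by auto
    qed
    show "Lp_interior M p Ap \<noteq> {} \<Longrightarrow> is_Lp_extension M p S0 ST Ap (rho Ai S0 ST)"
      by (rule ext_Ap)
    show "Lp_interior M p Ap \<noteq> {} \<Longrightarrow> \<forall>B. is_Lp_extension M p S0 ST B (rho Ai S0 ST) \<longrightarrow>
        (\<forall>X\<in>Lp M p. rho B S0 ST X = rho Ap S0 ST X)"
      using ext_unique by auto
  qed
qed

end
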